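(* Let $n\in\mathbb{N}$ and let $X$ be a random matrix drawn from the polynomial random matrix ensemble on $\mathrm{GL}(n,\mathbb{C})$ associated with weight functions $w_0,\dots,w_{n-1}\in L^{1,0}_{[1,n]}(\mathbb{R}_+)$. Then the spherical transform of $X$ is given by \[ \mathcal{S}_X(s)=C_{\rm sv}^{(n)}[w]\Big(\prod_{j=0}^{n} j!\Big)\frac{\det\big[\mathcal{M}w_{j-1}(s_k-(n-1)/2)\big]_{j,k=1,\dots,n}}{\Delta_n(s)} \] for all $s\in\mathbb{C}^n$ (with pairwise distinct components) for which the spherical transform and the Mellin transforms on the right-hand side are defined (in particular for $s\in\varrho'+\imath\mathbb{R}^n$).
   Context: Notation: $\Delta_n(x)=\prod_{1\le j<k\le n}(x_k-x_j)$ is the Vandermonde determinant. $\mathbb{R}_+=(0,\infty)$. The Mellin transform of $f\in L^1(\mathbb{R}_+)$ is $\mathcal{M}f(s)=\int_0^\infty f(x)x^{s-1}dx$. For an interval $\mathbb{I}\subset\mathbb{R}$ containing $1$ and $k\in\mathbb{N}_0$, $L^{1,k}_{\mathbb{I}}(\mathbb{R}_+)$ is the set of $f\in L^1(\mathbb{R}_+)$ that are $k$ times differentiable (i.e. $(k-1)$ times continuously differentiable with absolutely continuous $(k-1)$st derivative) such that $\int_0^\infty|y^{\kappa-1}(-y\,\partial_y)^jf(y)|dy<\infty$ for all $\kappa\in\mathbb{I}$ and $j=0,\dots,k$. Polynomial ensemble: given $w_0,\dots,w_{n-1}\in L^{1,0}_{[1,n]}(\mathbb{R}_+)$ such that the function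 $f_{\rm SV}(a)=C_{\rm sv}^{(n)}[w]\Delta_n(a)\det[w_{j-1}(a_k)]_{j,k=1,\dots,n}$ on $(0,\infty)^n$ is non-negative, where $C_{\rm sv}^{(n)}[w]=\big(n!\det[\int_0^\infty a^{k-1}w_{j-1}(a)da]_{j,k=1,\dots,n}\big)^{-1}$, the associated polynomial random matrix ensemble is the distribution of a random matrix $X\in\mathrm{GL}(n,\mathbb{C})$ having a density with respect to Lebesgue measure $dg=\prod_{j,k}dg_{jk}$ that is bi-unitarily invariant ($f_G(k_1gk_2)=f_G(g)$ for all unitary $k_1,k_2$), such that the (permutation-symmetric) joint density of the squared singular values of $X$ is $f_{\rm SV}$. Spherical transform: for a random matrix $X$ with bi-unitarily invariant Lebesgue density $f_G$ on $G=\mathrm{GL}(n,\mathbb{C})$, $\mathcal{S}_X(s)=\int_G f_G(g)\varphi_s(g)\,\frac{dg}{|\det g|^{2n}}$, where $\varphi_s(g)=\frac{\Delta_n(\varrho')}{\Delta_n(s)}\frac{\det[\lambda_j(g^*g)^{s_k+(n-1)/2}]_{j,k=1,\dots,n}}{\Delta_n(\lambda(g^*g))}$ for $s\in\mathbb{C}^n$, $\lambda(g^*g)=(\lambda_1(g^*g),\dots,\lambda_n(g^*g))$ are the eigenvalues of $g^*g$, and $\varrho'=(\varrho'_1,\dots,\varrho'_n)$ with $\varrho'_j=(2j+n-1)/2$. *)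

theory Defs
  imports "HOL-Analysis.Analysis" "Jordan_Normal_Form.Schur_Decomposition"
    "HOL-Computational_Algebra.Polynomial"
begin

text \<open>Conventions: indices are 0-based, so the paper's index j=1..n becomes j=0..n-1.
 An n x n complex matrix is a function on the index set {..<n} x {..<n}
 (extensional, as elements of the product measure space); Lebesgue measure on
 the space of such matrices is the product of Lebesgue measures on the entries.\<close>

definition Mat_idx :: "nat \<Rightarrow> (nat \<times> nat) set" where
  "Mat_idx n = {..<n} \<times> {..<n}"

definition lebesgue_mat :: "nat \<Rightarrow> (nat \<times> nat \<Rightarrow> complex) measure" where
  "lebesgue_mat n = PiM (Mat_idx n) (\<lambda>_. lborel)"

definition lebesgue_vec :: "nat \<Rightarrow> (nat \<Rightarrow> real) measure" where
  "lebesgue_vec n = PiM {..<n} (\<lambda>_. lborel)"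

definition to_mat :: "nat \<Rightarrow> (nat \<times> nat \<Rightarrow> complex) \<Rightarrow> complex mat" where
  "to_mat n g = mat n n (\<lambda>(i,j). g (i,j))"

definition of_mat :: "nat \<Rightarrow> complex mat \<Rightarrow> (nat \<times> nat \<Rightarrow> complex)" where
  "of_mat n A = restrict (\<lambda>(i,j). A $$ (i,j)) (Mat_idx n)"

definition unitary_mat :: "nat \<Rightarrow> complex mat \<Rightarrow> bool" where
  "unitary_mat n U \<longleftrightarrow> U \<in> carrier_mat n n \<and> mat_adjoint U * U = 1\<^sub>m n"

definition bi_unitarily_invariant :: "nat \<Rightarrow> ((nat \<times> nat \<Rightarrow> complex) \<Rightarrow> real) \<Rightarrow> bool" where
  "bi_unitarily_invariant n f \<longleftrightarrow>
     (\<forall>g \<in> space (lebesgue_mat n). \<forall>k1 k2. unitary_mat n k1 \<and> unitary_mat n k2 \<longrightarrow>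
        f (of_mat n (k1 * to_mat n g * k2)) = f g)"

definition vandermonde :: "nat \<Rightarrow> (nat \<Rightarrow> 'a::comm_ring_1) \<Rightarrow> 'a" where
  "vandermonde n x = (\<Prod>k<n. \<Prod>j<k. (x k - x j))"

text \<open>Eigenvalues of g^* g (real, listed in increasing order, with multiplicity):
  the squared singular values of g.\<close>
definition sq_sv :: "nat \<Rightarrow> (nat \<times> nat \<Rightarrow> complex) \<Rightarrow> (nat \<Rightarrow> real)" where
  "sq_sv n g = restrict (\<lambda>i. sorted_list_of_multiset
       (image_mset Re (proots (char_poly (mat_adjoint (to_mat n g) * to_mat n g)))) ! i) {..<n}"

definition mellin :: "(real \<Rightarrow> real) \<Rightarrow> complex \<Rightarrow> complex" where
  "mellin f s = set_lebesgue_integral lborel {0<..} (\<lambda>x. complex_of_real (f x) * complex_of_real x powr (s - 1))"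

definition mellin_defined :: "(real \<Rightarrow> real) \<Rightarrow> complex \<Rightarrow> bool" where
  "mellin_defined f s \<longleftrightarrow> set_integrable lborel {0<..} (\<lambda>x. complex_of_real (f x) * complex_of_real x powr (s - 1))"

definition L1k0 :: "real set \<Rightarrow> (real \<Rightarrow> real) \<Rightarrow> bool" where
  "L1k0 I f \<longleftrightarrow> set_integrable lborel {0<..} f \<and>
      (\<forall>\<kappa>\<in>I. set_integrable lborel {0<..} (\<lambda>y. y powr (\<kappa> - 1) * f y))"

definition C_sv :: "nat \<Rightarrow> (nat \<Rightarrow> real \<Rightarrow> real) \<Rightarrow> real" where
  "C_sv n w = 1 / (fact n * Determinant.det (mat n n (\<lambda>(j,k).
       set_lebesgue_integral lborel {0<..} (\<lambda>a. a ^ k * w j a))))"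

definition f_SV :: "nat \<Rightarrow> (nat \<Rightarrow> real \<Rightarrow> real) \<Rightarrow> (nat \<Rightarrow> real) \<Rightarrow> real" where
  "f_SV n w a = C_sv n w * vandermonde n a * Determinant.det (mat n n (\<lambda>(j,k). w j (a k)))"

definition pos_orthant :: "nat \<Rightarrow> (nat \<Rightarrow> real) set" where
  "pos_orthant n = {a \<in> space (lebesgue_vec n). \<forall>i<n. 0 < a i}"

definition perm_symmetric_set :: "nat \<Rightarrow> (nat \<Rightarrow> real) set \<Rightarrow> bool" where
  "perm_symmetric_set n B \<longleftrightarrow> (\<forall>p. p permutes {..<n} \<longrightarrow>
      (\<forall>a \<in> B. restrict (a \<circ> p) {..<n} \<in> B))"

text \<open>Polynomial ensemble: f_G is a bi-unitarily invariant Lebesgue probability density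
  on n x n complex matrices whose (permutation-symmetric) joint density of squared
  singular values is f_SV, i.e. P(sv(X) in B) = int_B f_SV for every symmetric Borel set B.\<close>
definition polynomial_ensemble ::
  "nat \<Rightarrow> (nat \<Rightarrow> real \<Rightarrow> real) \<Rightarrow> ((nat \<times> nat \<Rightarrow> complex) \<Rightarrow> real) \<Rightarrow> bool" where
  "polynomial_ensemble n w fG \<longleftrightarrow>
     fG \<in> borel_measurable (lebesgue_mat n) \<and>
     (\<forall>g \<in> space (lebesgue_mat n). 0 \<le> fG g) \<and>
     (\<integral>\<^sup>+ g. ennreal (fG g) \<partial>lebesgue_mat n) = 1 \<and>
     bi_unitarily_invariant n fG \<and>
     (\<forall>B \<in> sets (lebesgue_vec n). perm_symmetric_set n B \<longrightarrow>
        (\<integral>\<^sup>+ g. ennreal (fG g) * indicator B (sq_sv n g) \<partial>lebesgue_mat n) =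
        (\<integral>\<^sup>+ a. ennreal (f_SV n w a) * indicator (B \<inter> pos_orthant n) a \<partial>lebesgue_vec n))"

definition rho' :: "nat \<Rightarrow> nat \<Rightarrow> complex" where
  "rho' n j = of_real ((2 * (real j + 1) + real n - 1) / 2)"

definition spherical_fun :: "nat \<Rightarrow> (nat \<Rightarrow> complex) \<Rightarrow> (nat \<times> nat \<Rightarrow> complex) \<Rightarrow> complex" where
  "spherical_fun n s g =
     (let lam = sq_sv n g in
       vandermonde n (rho' n) / vandermonde n s *
       (Determinant.det (mat n n (\<lambda>(j,k). complex_of_real (lam j) powr (s k + (of_nat n - 1) / 2)))
        / complex_of_real (vandermonde n lam)))"

definition spherical_integrand ::
  "nat \<Rightarrow> ((nat \<times> nat \<Rightarrow> complex) \<Rightarrow> real) \<Rightarrow> (nat \<Rightarrow> complex) \<Rightarrow> (nat \<times> nat \<Rightarrow> complex) \<Rightarrow> complex" where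
  "spherical_integrand n fG s g =
     complex_of_real (fG g) * spherical_fun n s g / complex_of_real (cmod (Determinant.det (to_mat n g)) ^ (2 * n))"

definition spherical_transform ::
  "nat \<Rightarrow> ((nat \<times> nat \<Rightarrow> complex) \<Rightarrow> real) \<Rightarrow> (nat \<Rightarrow> complex) \<Rightarrow> complex" where
  "spherical_transform n fG s = (\<integral> g. spherical_integrand n fG s g \<partial>lebesgue_mat n)"

end

theory Submission
  imports Defs
begin


lemma det_scale_rows:
  fixes d :: "nat \<Rightarrow> 'a::comm_ring_1"
  shows "det (mat n n (\<lambda>(i,j). d i * a i j)) = (\<Prod>i<n. d i) * det (mat n n (\<lambda>(i,j). a i j))"
proof -
  have "det (mat n n (\<lambda>(i,j). d i * a i j)) = (\<Sum>p\<in>{p. p permutes {0..<n}}. signof p * (\<Prod>i=0..<n. d i * a i (p i)))"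
    by (subst det_def'[of _ n]) (auto intro!: sum.cong prod.cong simp: permutes_def)
  also have "\<dots> = (\<Sum>p\<in>{p. p permutes {0..<n}}. (\<Prod>i<n. d i) * (signof p * (\<Prod>i=0..<n. a i (p i))))"
    by (intro sum.cong refl) (simp add: prod.distrib atLeast0LessThan ac_simps)
  also have "\<dots> = (\<Prod>i<n. d i) * det (mat n n (\<lambda>(i,j). a i j))"
    by (subst det_def'[of _ n]) (auto simp: sum_distrib_left intro!: sum.cong prod.cong dest: permutes_in_image)
  finally show ?thesis .
qed

lemma vandermonde_Suc: "vandermonde (Suc n) x = vandermonde n x * (\<Prod>j<n. x n - x j)"
  by (simp add: vandermonde_def)

lemma vandermonde_det: "vandermonde n x = det (mat n n (\<lambda>(i,j). x i ^ j))"
proof (induction n)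
  case 0
  then show ?case by (simp add: vandermonde_def)
next
  case (Suc n)
  define c where "c = x n"
  define V where "V = mat (Suc n) (Suc n) (\<lambda>(i,j). x i ^ j)"
  define U where "U = mat (Suc n) (Suc n) (\<lambda>(i,j). if i = j then 1 else if Suc i = j then -c else 0)"
  define B where "B = mat (Suc n) (Suc n) (\<lambda>(i,j). if j = 0 then 1 else x i ^ (j-1) * (x i - c))"
  have VU: "V * U = B"
  proof (rule eq_matI)
    fix i j assume i: "i < dim_row B" and j: "j < dim_col B"
    have "(V * U) $$ (i,j) = (\<Sum>k<Suc n. x i ^ k * (if k = j then 1 else if Suc k = j then -c else 0))"
      using i j by (simp add: V_def U_def B_def scalar_prod_def atLeast0LessThan)
    also have "\<dots> = (\<Sum>k<Suc n. (if k = j then x i ^ k else 0) + (if Suc k = j then - c * x i ^ k else 0))"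
      by (intro sum.cong refl) auto
    also have "\<dots> = B $$ (i,j)"
    proof (cases j)
      case 0 then show ?thesis using i j by (simp add: sum.distrib B_def)
    next
      case (Suc j') 
      have "(\<Sum>k<Suc n. (if Suc k = j then - c * x i ^ k else 0)) = - c * x i ^ j'"
        using j Suc by (simp add: B_def sum.delta')
      then show ?thesis using i j Suc by (cases "Suc j' = n") (auto simp: sum.distrib B_def algebra_simps)
    qed
    finally show "(V * U) $$ (i,j) = B $$ (i,j)" .
  qed (auto simp: V_def B_def U_def)
  have detU: "det U = 1"
    by (subst det_upper_triangular[of _ "Suc n"]) (auto simp: U_def upper_triangular_def diag_mat_def prod_list_zero_iff intro!: prod_list_neutral)
  have "det V = det B"
    using det_mult[of V "Suc n" U] VU detU by (simp add: V_def U_def)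
  also have "det B = (\<Sum>j<Suc n. B $$ (n,j) * cofactor B n j)"
    by (rule laplace_expansion_row) (auto simp: B_def)
  also have "\<dots> = cofactor B n 0"
    by (subst sum.lessThan_Suc_shift) (simp add: B_def c_def)
  also have "mat_delete B n 0 = mat n n (\<lambda>(i,j). (x i - c) * x i ^ j)"
    by (rule eq_matI) (auto simp: mat_delete_def B_def)
  hence "cofactor B n 0 = (-1)^n * ((\<Prod>i<n. x i - c) * vandermonde n x)"
    unfolding cofactor_def by (simp add: det_scale_rows Suc.IH)
  also have "\<dots> = vandermonde (Suc n) x"
  proof -
    have "(\<Prod>i<n. x i - c) = (-1)^n * (\<Prod>i<n. x n - x i)"
    proof -
      have "(\<Prod>i<n. x i - c) = (\<Prod>i<n. (-1) * (x n - x i))" unfolding c_def by (intro prod.cong) auto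
      thus ?thesis by (simp only: prod.distrib prod_constant card_lessThan)
    qed
    thus ?thesis by (simp add: vandermonde_Suc algebra_simps)
  qed
  finally show ?case by (simp add: V_def)
qed



lemma proots_linear_prod: "proots (\<Prod>a\<leftarrow>as. [:- a, 1:]) = mset (as :: complex list)"
proof (induction as)
  case Nil then show ?case by simp
next
  case (Cons a as)
  have lin: "\<And>a. [:- a, 1:] \<noteq> (0::complex poly)" by simp
  have nz: "(\<Prod>a\<leftarrow>as. [:- a, 1:]) \<noteq> (0 :: complex poly)"
    using prod_list_zero_iff[of "map (\<lambda>a. [:- a, 1:]) as"] lin by auto
  have "proots (\<Prod>a\<leftarrow>a # as. [:- a, 1:]) = proots ([:- a, 1:] * (\<Prod>a\<leftarrow>as. [:- a, 1:]))" by simp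
  also have "\<dots> = proots [:- a, 1:] + proots (\<Prod>a\<leftarrow>as. [:- a, 1:])"
    by (rule proots_mult) (use nz in auto)
  finally show ?case using Cons by simp
qed

lemma det_cnj_mat:
  assumes G: "G \<in> carrier_mat n n"
  shows "det (mat n n (\<lambda>(i,j). cnj (G $$ (i,j)))) = cnj (det G)"
proof -
  have "det (mat n n (\<lambda>(i,j). cnj (G $$ (i,j)))) = (\<Sum>p\<in>{p. p permutes {0..<n}}. signof p * (\<Prod>i=0..<n. cnj (G $$ (i, p i))))"
    by (subst det_def'[of _ n]) (auto intro!: sum.cong prod.cong dest: permutes_in_image)
  also have "\<dots> = cnj (det G)"
    by (subst det_def'[OF G]) (simp add: cnj_sum cnj_prod sign_def)
  finally show ?thesis .
qed

lemma det_mat_adjoint: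
  assumes G: "G \<in> carrier_mat n n"
  shows "det (mat_adjoint G) = cnj (det G)"
proof -
  have "mat_adjoint G = transpose_mat (mat n n (\<lambda>(i,j). cnj (G $$ (i,j))))"
    using G by (intro eq_matI) (auto simp: mat_adjoint_def mat_of_rows_def conjugate_vec_def)
  hence "det (mat_adjoint G) = det (mat n n (\<lambda>(i,j). cnj (G $$ (i,j))))"
    using det_transpose[of "mat n n (\<lambda>(i,j). cnj (G $$ (i,j)))" n] by simp
  thus ?thesis using det_cnj_mat[OF G] by simp
qed



lemma triple_sum_swap:
  fixes f :: "nat \<Rightarrow> nat \<Rightarrow> nat \<Rightarrow> 'a::comm_semiring_1"
  shows "(\<Sum>i<n. (\<Sum>k<n. (\<Sum>l<n. f i k l))) = (\<Sum>l<n. (\<Sum>i<n. (\<Sum>k<n. f i k l)))"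
proof -
  have "(\<Sum>i<n. (\<Sum>k<n. (\<Sum>l<n. f i k l))) = (\<Sum>i<n. (\<Sum>l<n. (\<Sum>k<n. f i k l)))"
    by (rule sum.cong[OF refl]) (rule sum.swap)
  also have "\<dots> = (\<Sum>l<n. (\<Sum>i<n. (\<Sum>k<n. f i k l)))" by (rule sum.swap)
  finally show ?thesis .
qed

lemma eigenvalue_adjoint_real:
  fixes G :: "complex mat"
  assumes G: "G \<in> carrier_mat n n" and ev: "eigenvector (mat_adjoint G * G) v a"
  shows "Im a = 0"
proof -
  let ?A = "mat_adjoint G * G"
  have v: "v \<in> carrier_vec n" and vnz: "v \<noteq> 0\<^sub>v n" and Av: "?A *\<^sub>v v = a \<cdot>\<^sub>v v"
    using ev G unfolding eigenvector_def by (auto simp: mat_adjoint_def)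
  have Aik: "?A $$ (i,k) = (\<Sum>l<n. cnj (G $$ (l,i)) * G $$ (l,k))" if "i < n" "k < n" for i k
    using that G by (auto simp: mat_adjoint_def scalar_prod_def atLeast0LessThan conjugate_vec_def)
  have Avi: "(?A *\<^sub>v v) $ i = (\<Sum>k<n. (\<Sum>l<n. cnj (G $$ (l,i)) * G $$ (l,k)) * v $ k)" if "i < n" for i
    using that G v by (auto simp: scalar_prod_def atLeast0LessThan Aik mat_adjoint_def intro!: sum.cong)
  define w where "w l = (\<Sum>k<n. G $$ (l,k) * v $ k)" for l
  define S where "S = (\<Sum>i<n. cnj (v $ i) * (?A *\<^sub>v v) $ i)"
  have "S = (\<Sum>i<n. (\<Sum>k<n. (\<Sum>l<n. cnj (v $ i) * cnj (G $$ (l,i)) * (G $$ (l,k) * v $ k))))"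
    unfolding S_def by (intro sum.cong refl) (simp add: Avi sum_distrib_left sum_distrib_right mult_ac)
  also have "\<dots> = (\<Sum>l<n. (\<Sum>i<n. (\<Sum>k<n. cnj (v $ i) * cnj (G $$ (l,i)) * (G $$ (l,k) * v $ k))))"
    by (rule triple_sum_swap)
  also have "\<dots> = (\<Sum>l<n. cnj (w l) * w l)"
    unfolding w_def by (simp add: sum_product cnj_sum mult_ac, rule sum.cong[OF refl], rule sum.swap)
  finally have S1: "S = (\<Sum>l<n. cnj (w l) * w l)" .
  have "Im S = 0" unfolding S1 by (simp add: Im_sum)
  have S2: "S = a * (\<Sum>i<n. cnj (v $ i) * v $ i)"
    unfolding S_def using v by (simp add: Av sum_distrib_left mult_ac)
  have T: "(\<Sum>i<n. cnj (v $ i) * v $ i) = of_real (\<Sum>i<n. (cmod (v $ i))^2)"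
    unfolding of_real_sum by (intro sum.cong refl) (metis complex_norm_square mult.commute)
  obtain i where i: "i < n" "v $ i \<noteq> 0" using vnz v by (metis vec_eq_iff index_zero_vec(1) carrier_vecD index_zero_vec(2))
  have Tpos: "(\<Sum>i<n. (cmod (v $ i))^2) > 0"
  proof -
    have "(\<Sum>i<n. (cmod (v $ i))^2) \<ge> (cmod (v $ i))^2"
      using i by (intro member_le_sum) auto
    moreover have "(cmod (v $ i))^2 > 0" using i by simp
    ultimately show ?thesis by linarith
  qed
  have "Im S = Im a * (\<Sum>i<n. (cmod (v $ i))^2)" unfolding S2 T by simp
  with \<open>Im S = 0\<close> Tpos show ?thesis by simp
qed



lemma prod_list_uminus: "prod_list (map (\<lambda>a. - a) (as :: 'a::comm_ring_1 list)) = (-1)^length as * prod_list as"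
  by (induction as) auto

lemma to_mat_carrier: "to_mat n g \<in> carrier_mat n n"
  by (simp add: to_mat_def)

lemma mat_adjoint_carrier: "G \<in> carrier_mat n n \<Longrightarrow> mat_adjoint G \<in> carrier_mat n n"
  by (auto simp: mat_adjoint_def)

lemma sq_sv_prod: "(\<Prod>i<n. sq_sv n g i) = (cmod (det (to_mat n g)))^2"
proof -
  define G where "G = to_mat n g"
  define A where "A = mat_adjoint G * G"
  have G: "G \<in> carrier_mat n n" unfolding G_def by (rule to_mat_carrier)
  have A: "A \<in> carrier_mat n n" unfolding A_def using G mat_adjoint_carrier[OF G] by auto
  obtain as where cp: "char_poly A = (\<Prod>a\<leftarrow>as. [:- a, 1:])" and len: "length as = n"
    using char_poly_factorized[OF A] by blast
  have pr: "proots (char_poly A) = mset as" unfolding cp by (rule proots_linear_prod)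
  have real: "Im a = 0" if a: "a \<in> set as" for a
  proof -
    have "poly (char_poly A) a = 0" unfolding cp poly_prod_list using a
      by (auto simp: prod_list_zero_iff)
    hence "eigenvalue A a" using eigenvalue_root_char_poly[OF A] by simp
    then obtain v where "eigenvector A v a" unfolding eigenvalue_def by blast
    thus ?thesis using eigenvalue_adjoint_real[OF G] unfolding A_def by blast
  qed
  have detA: "det A = prod_list as"
  proof -
    have cm: "char_matrix A 0 = A" using A by (intro eq_matI) (auto simp: char_matrix_def)
    have mA: "- A = (-1) \<cdot>\<^sub>m A" using A by (intro eq_matI) auto
    have "poly (char_poly A) 0 = det (- A)" using char_poly_matrix[OF A, of 0] cm by simp
    also have "\<dots> = (-1)^n * det A" unfolding mA using A by simp
    finally have "(-1)^n * det A = (-1)^n * prod_list as"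
      unfolding cp poly_prod_list using len prod_list_uminus[of as] by (simp add: o_def)
    thus ?thesis by simp
  qed
  have "det A = det (mat_adjoint G) * det G" unfolding A_def by (rule det_mult[OF mat_adjoint_carrier[OF G] G])
  also have "\<dots> = complex_of_real ((cmod (det G))^2)"
    by (simp only: det_mat_adjoint[OF G]) (metis complex_norm_square mult.commute)
  finally have dA: "prod_list as = complex_of_real ((cmod (det G))^2)" using detA by simp
  define L where "L = sorted_list_of_multiset (image_mset Re (proots (char_poly A)))"
  have L: "L = sort (map Re as)" unfolding L_def pr by (simp flip: mset_map)
  have lenL: "length L = n" unfolding L using len by simp
  have "(\<Prod>i<n. sq_sv n g i) = (\<Prod>i<n. L ! i)"
    unfolding sq_sv_def L_def A_def G_def by simp
  also have "\<dots> = prod_list L" using lenL by (simp add: prod.list_conv_set_nth atLeast0LessThan)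
  also have "\<dots> = prod_list (map Re as)" unfolding L
    by (metis mset_sort prod_mset_prod_list)
  finally have eq: "(\<Prod>i<n. sq_sv n g i) = prod_list (map Re as)" .
  have "complex_of_real (prod_list (map Re as)) = prod_list as"
    using real by (induction as) (auto simp: complex_eq_iff)
  with dA eq show ?thesis unfolding G_def by (metis of_real_eq_iff)
qed



lemma perm_double_sum:
  fixes m :: "nat \<Rightarrow> nat \<Rightarrow> 'a::comm_ring_1"
  shows "(\<Sum>p\<in>{p. p permutes {0..<n}}. \<Sum>q\<in>{p. p permutes {0..<n}}.
            of_int (sign p * sign q) * (\<Prod>i\<in>{0..<n}. m (p i) (q i)))
        = of_nat (fact n) * det (mat n n (\<lambda>(j,k). m j k))"
proof -
  let ?P = "{p. p permutes {0..<n}}"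
  let ?D = "(\<Sum>r\<in>?P. of_int (sign r) * (\<Prod>j\<in>{0..<n}. m j (r j)))"
  have inner: "(\<Sum>q\<in>?P. of_int (sign p * sign q) * (\<Prod>i\<in>{0..<n}. m (p i) (q i))) = ?D"
    if p: "p permutes {0..<n}" for p
  proof -
    have pp: "permutation p" using p by (auto simp: permutation_permutes)
    have bij: "bij_betw (\<lambda>r. r \<circ> p) ?P ?P"
    proof (rule bij_betwI[where g = "\<lambda>q. q \<circ> Hilbert_Choice.inv p"])
      show "(\<lambda>r. r \<circ> p) \<in> ?P \<rightarrow> ?P" using p by (auto intro: permutes_compose)
      show "(\<lambda>q. q \<circ> Hilbert_Choice.inv p) \<in> ?P \<rightarrow> ?P" using p by (auto intro: permutes_compose permutes_inv)
      show "r \<circ> p \<circ> Hilbert_Choice.inv p = r" for r using p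
        by (simp add: o_assoc[symmetric] permutes_inv_o(1))
      show "q \<circ> Hilbert_Choice.inv p \<circ> p = q" for q using p
        by (simp add: o_assoc[symmetric] permutes_inv_o(2))
    qed
    have "(\<Sum>q\<in>?P. of_int (sign p * sign q) * (\<Prod>i\<in>{0..<n}. m (p i) (q i)))
        = (\<Sum>r\<in>?P. of_int (sign p * sign (r \<circ> p)) * (\<Prod>i\<in>{0..<n}. m (p i) ((r \<circ> p) i)))"
      by (rule sum.reindex_bij_betw[OF bij, symmetric])
    also have "\<dots> = ?D"
    proof (rule sum.cong[OF refl])
      fix r assume r: "r \<in> ?P"
      have rp: "permutation r" using r by (auto simp: permutation_permutes)
      have s: "sign p * sign (r \<circ> p) = sign r"
        using sign_compose[OF rp pp] by (simp add: mult.assoc[symmetric] mult.commute)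
      have "(\<Prod>i\<in>{0..<n}. m (p i) ((r \<circ> p) i)) = (\<Prod>i\<in>{0..<n}. (\<lambda>j. m j (r j)) (p i))" by simp
      also have "\<dots> = (\<Prod>j\<in>{0..<n}. m j (r j))"
        using prod.permute[OF p, of "\<lambda>j. m j (r j)"] by (simp add: o_def)
      finally show "of_int (sign p * sign (r \<circ> p)) * (\<Prod>i\<in>{0..<n}. m (p i) ((r \<circ> p) i)) =
          of_int (sign r) * (\<Prod>j\<in>{0..<n}. m j (r j))" using s by simp
    qed
    finally show ?thesis .
  qed
  have "(\<Sum>p\<in>?P. \<Sum>q\<in>?P. of_int (sign p * sign q) * (\<Prod>i\<in>{0..<n}. m (p i) (q i))) = (\<Sum>p\<in>?P. ?D)"
    by (rule sum.cong[OF refl], rule inner) simp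
  also have "\<dots> = of_nat (card ?P) * ?D" by simp
  also have "card ?P = fact n" by (rule card_permutations) auto
  also have "?D = det (mat n n (\<lambda>(j,k). m j k))"
    by (subst det_def'[of _ n]) (auto intro!: sum.cong prod.cong dest: permutes_in_image)
  finally show ?thesis by simp
qed



interpretation lb: product_sigma_finite "\<lambda>_::nat. (lborel :: real measure)"
  by unfold_locales

lemma space_lebesgue_vec: "space (lebesgue_vec n) = (\<Pi>\<^sub>E i\<in>{..<n}. UNIV)"
  by (simp add: lebesgue_vec_def space_PiM)

lemma indicator_pos_orthant:
  assumes "a \<in> space (lebesgue_vec n)"
  shows "indicator (pos_orthant n) a = (\<Prod>i\<in>{..<n}. indicator {0<..} (a i) :: real)"
  using assms by (auto simp: pos_orthant_def indicator_def prod_zero_iff)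

lemma det_expand_cols:
  "det (mat n n (\<lambda>(i,j). f i j)) = (\<Sum>p\<in>{p. p permutes {0..<n}}. of_int (sign p) * (\<Prod>i\<in>{..<n}. f i (p i)))"
  by (subst det_def'[of _ n]) (auto simp: atLeast0LessThan intro!: sum.cong prod.cong dest: permutes_in_image)

lemma andreief:
  fixes u v :: "nat \<Rightarrow> real \<Rightarrow> complex"
  assumes int: "\<And>j k. j < n \<Longrightarrow> k < n \<Longrightarrow> set_integrable lborel {0<..} (\<lambda>x. u j x * v k x)"
  defines "F \<equiv> \<lambda>a. indicator (pos_orthant n) a *\<^sub>R (det (mat n n (\<lambda>(i,j). u j (a i))) * det (mat n n (\<lambda>(i,j). v j (a i))))"
  shows "integrable (lebesgue_vec n) F \<and> integral\<^sup>L (lebesgue_vec n) F =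
     of_nat (fact n) * det (mat n n (\<lambda>(j,k). set_lebesgue_integral lborel {0<..} (\<lambda>x. u j x * v k x)))"
proof -
  let ?P = "{p. p permutes {0..<n}}"
  define G where "G p q i x = indicator {0<..} x *\<^sub>R (u (p i) x * v (q i) x)" for p q :: "nat \<Rightarrow> nat" and i x
  define H where "H a = (\<Sum>p\<in>?P. \<Sum>q\<in>?P. of_int (sign p * sign q) * (\<Prod>i\<in>{..<n}. G p q i (a i)))" for a
  have FH: "F a = H a" if a: "a \<in> space (lebesgue_vec n)" for a
  proof -
    have "F a = (\<Prod>i\<in>{..<n}. indicator {0<..} (a i) :: real) *\<^sub>R
       ((\<Sum>p\<in>?P. of_int (sign p) * (\<Prod>i\<in>{..<n}. u (p i) (a i))) * (\<Sum>q\<in>?P. of_int (sign q) * (\<Prod>i\<in>{..<n}. v (q i) (a i))))"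
      unfolding F_def indicator_pos_orthant[OF a] det_expand_cols ..
    also have "\<dots> = H a"
      unfolding H_def G_def sum_product scaleR_sum_right
      by (intro sum.cong refl) (simp add: prod.distrib scaleR_conv_of_real of_real_prod mult_ac)
    finally show ?thesis .
  qed
  have intG: "integrable lborel (G p q i)" if "p \<in> ?P" "q \<in> ?P" "i < n" for p q i
  proof -
    have "p i < n" "q i < n" using that by (auto dest: permutes_in_image)
    thus ?thesis using int unfolding G_def set_integrable_def by blast
  qed
  have intprod: "integrable (lebesgue_vec n) (\<lambda>a. \<Prod>i\<in>{..<n}. G p q i (a i))" if "p \<in> ?P" "q \<in> ?P" for p q
    unfolding lebesgue_vec_def by (rule lb.product_integrable_prod) (use intG that in auto)
  have intH: "integrable (lebesgue_vec n) H"
    unfolding H_def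
  proof (rule Bochner_Integration.integrable_sum, rule Bochner_Integration.integrable_sum)
    fix p q assume "p \<in> ?P" "q \<in> ?P"
    thus "integrable (lebesgue_vec n) (\<lambda>a. of_int (sign p * sign q) * (\<Prod>i\<in>{..<n}. G p q i (a i)))"
      using intprod by (intro integrable_mult_right) auto
  qed
  have "integral\<^sup>L (lebesgue_vec n) H = (\<Sum>p\<in>?P. \<Sum>q\<in>?P. of_int (sign p * sign q) *
        (\<Prod>i\<in>{..<n}. set_lebesgue_integral lborel {0<..} (\<lambda>x. u (p i) x * v (q i) x)))"
  proof -
    have "integral\<^sup>L (lebesgue_vec n) H = (\<Sum>p\<in>?P. \<Sum>q\<in>?P. of_int (sign p * sign q) *
        integral\<^sup>L (lebesgue_vec n) (\<lambda>a. \<Prod>i\<in>{..<n}. G p q i (a i)))"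
      unfolding H_def
    proof (subst Bochner_Integration.integral_sum, rule Bochner_Integration.integrable_sum)
      fix p q assume "p \<in> ?P" "q \<in> ?P"
      thus "integrable (lebesgue_vec n) (\<lambda>a. of_int (sign p * sign q) * (\<Prod>i\<in>{..<n}. G p q i (a i)))"
        using intprod by (intro integrable_mult_right) auto
    next
      show "(\<Sum>p\<in>?P. integral\<^sup>L (lebesgue_vec n) (\<lambda>a. \<Sum>q\<in>?P. of_int (sign p * sign q) * (\<Prod>i\<in>{..<n}. G p q i (a i)))) =
        (\<Sum>p\<in>?P. \<Sum>q\<in>?P. of_int (sign p * sign q) * integral\<^sup>L (lebesgue_vec n) (\<lambda>a. \<Prod>i\<in>{..<n}. G p q i (a i)))"
      proof (rule sum.cong[OF refl])
        fix p assume p: "p \<in> ?P"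
        show "integral\<^sup>L (lebesgue_vec n) (\<lambda>a. \<Sum>q\<in>?P. of_int (sign p * sign q) * (\<Prod>i\<in>{..<n}. G p q i (a i))) =
          (\<Sum>q\<in>?P. of_int (sign p * sign q) * integral\<^sup>L (lebesgue_vec n) (\<lambda>a. \<Prod>i\<in>{..<n}. G p q i (a i)))"
          using intprod p by (subst Bochner_Integration.integral_sum) (auto intro!: integrable_mult_right simp del: of_int_mult)
      qed
    qed
    also have "\<dots> = (\<Sum>p\<in>?P. \<Sum>q\<in>?P. of_int (sign p * sign q) *
        (\<Prod>i\<in>{..<n}. set_lebesgue_integral lborel {0<..} (\<lambda>x. u (p i) x * v (q i) x)))"
    proof (intro sum.cong refl)
      fix p q assume p: "p \<in> ?P" and q: "q \<in> ?P"
      have "integral\<^sup>L (lebesgue_vec n) (\<lambda>a. \<Prod>i\<in>{..<n}. G p q i (a i)) = (\<Prod>i\<in>{..<n}. integral\<^sup>L lborel (G p q i))"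
        unfolding lebesgue_vec_def by (rule lb.product_integral_prod) (use intG p q in auto)
      thus "of_int (sign p * sign q) * integral\<^sup>L (lebesgue_vec n) (\<lambda>a. \<Prod>i\<in>{..<n}. G p q i (a i)) =
        of_int (sign p * sign q) * (\<Prod>i\<in>{..<n}. set_lebesgue_integral lborel {0<..} (\<lambda>x. u (p i) x * v (q i) x))"
        unfolding G_def[abs_def] set_lebesgue_integral_def by simp
    qed
    finally show ?thesis .
  qed
  also have "\<dots> = of_nat (fact n) * det (mat n n (\<lambda>(j,k). set_lebesgue_integral lborel {0<..} (\<lambda>x. u j x * v k x)))"
    using perm_double_sum[of "\<lambda>j k. set_lebesgue_integral lborel {0<..} (\<lambda>x. u j x * v k x)" n]
    by (simp add: atLeast0LessThan)
  finally have "integral\<^sup>L (lebesgue_vec n) H = \<dots>" .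
  moreover have "integrable (lebesgue_vec n) F" using intH FH Bochner_Integration.integrable_cong[OF refl, of "lebesgue_vec n" F H] by auto
  moreover have "integral\<^sup>L (lebesgue_vec n) F = integral\<^sup>L (lebesgue_vec n) H" using FH by (intro Bochner_Integration.integral_cong) auto
  ultimately show ?thesis by simp
qed



lemma ennreal_as_integral:
  assumes "0 \<le> x" shows "ennreal x = (\<integral>\<^sup>+t. indicator {0..<x} t \<partial>lborel)"
  using assms by simp

lemma transfer_nn:
  fixes M :: "'a measure" and N :: "'b measure" and fG :: "'a \<Rightarrow> real" and S :: "'a \<Rightarrow> 'b"
    and H :: "'b \<Rightarrow> real" and \<rho> :: "'b \<Rightarrow> ennreal" and Sym :: "'b set \<Rightarrow> bool"
  assumes sfM: "sigma_finite_measure M" and sfN: "sigma_finite_measure N"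
    and fG[measurable]: "fG \<in> borel_measurable M" and fG0: "\<And>g. g \<in> space M \<Longrightarrow> 0 \<le> fG g"
    and S: "\<And>g. g \<in> space M \<Longrightarrow> S g \<in> space N"
    and H[measurable]: "H \<in> borel_measurable N" and H0: "\<And>a. a \<in> space N \<Longrightarrow> 0 \<le> H a"
    and HS[measurable]: "(\<lambda>g. fG g * H (S g)) \<in> borel_measurable M"
    and \<rho>[measurable]: "\<rho> \<in> borel_measurable N"
    and symH: "\<And>t. Sym {a \<in> space N. t < H a}"
    and hyp: "\<And>B. B \<in> sets N \<Longrightarrow> Sym B \<Longrightarrow>
        (\<integral>\<^sup>+g. ennreal (fG g) * indicator B (S g) \<partial>M) = (\<integral>\<^sup>+a. \<rho> a * indicator B a \<partial>N)"
  shows "(\<integral>\<^sup>+g. ennreal (fG g * H (S g)) \<partial>M) = (\<integral>\<^sup>+a. \<rho> a * ennreal (H a) \<partial>N)"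
proof -
  interpret M: sigma_finite_measure M by (rule sfM)
  interpret N: sigma_finite_measure N by (rule sfN)
  interpret PM: pair_sigma_finite M lborel ..
  interpret PN: pair_sigma_finite N lborel ..
  define B where "B t = {a \<in> space N. t < H a}" for t
  have Bs: "B t \<in> sets N" for t unfolding B_def by measurable
  define K where "K g t = ennreal (fG g) * indicator {0..} t * (if t * fG g < fG g * H (S g) then 1 else 0)" for g t
  have K_eq: "ennreal (fG g) * indicator {0..} t * indicator (B t) (S g) = K g t" if g: "g \<in> space M" for g t
  proof (cases "fG g = 0")
    case True then show ?thesis by (simp add: K_def)
  next
    case False
    hence pos: "fG g > 0" using fG0[OF g] by simp
    have "(t * fG g < fG g * H (S g)) = (t < H (S g))" using pos by (simp add: mult.commute)
    thus ?thesis using S[OF g] by (simp add: K_def B_def indicator_def)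
  qed
  have Kmeas: "case_prod K \<in> borel_measurable (M \<Otimes>\<^sub>M lborel)"
    unfolding K_def by measurable
  have "(\<integral>\<^sup>+g. ennreal (fG g * H (S g)) \<partial>M) = (\<integral>\<^sup>+g. \<integral>\<^sup>+t. K g t \<partial>lborel \<partial>M)"
  proof (rule nn_integral_cong)
    fix g assume g: "g \<in> space M"
    have "(\<integral>\<^sup>+t. K g t \<partial>lborel) = (\<integral>\<^sup>+t. ennreal (fG g) * indicator {0..<H (S g)} t \<partial>lborel)"
      unfolding K_eq[OF g, symmetric] using S[OF g] by (intro nn_integral_cong) (auto simp: B_def indicator_def)
    also have "\<dots> = ennreal (fG g) * ennreal (H (S g))"
      using H0[OF S[OF g]] by (subst nn_integral_cmult) auto
    also have "\<dots> = ennreal (fG g * H (S g))" using fG0[OF g] H0[OF S[OF g]] by (simp add: ennreal_mult)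
    finally show "ennreal (fG g * H (S g)) = (\<integral>\<^sup>+t. K g t \<partial>lborel)" ..
  qed
  also have "\<dots> = (\<integral>\<^sup>+t. \<integral>\<^sup>+g. K g t \<partial>M \<partial>lborel)"
    by (rule PM.Fubini'[symmetric]) (rule Kmeas)
  also have "\<dots> = (\<integral>\<^sup>+t. \<integral>\<^sup>+a. \<rho> a * indicator {0..} t * indicator (B t) a \<partial>N \<partial>lborel)"
  proof (rule nn_integral_cong)
    fix t :: real
    have "(\<integral>\<^sup>+g. K g t \<partial>M) = (\<integral>\<^sup>+g. ennreal (fG g) * indicator {0..} t * indicator (B t) (S g) \<partial>M)"
      using K_eq by (intro nn_integral_cong) auto
    also have "\<dots> = (\<integral>\<^sup>+a. \<rho> a * indicator {0..} t * indicator (B t) a \<partial>N)"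
    proof (cases "0 \<le> t")
      case True
      then show ?thesis using hyp[OF Bs symH[of t, folded B_def]] by simp
    next
      case False
      then show ?thesis by simp
    qed
    finally show "(\<integral>\<^sup>+g. K g t \<partial>M) = (\<integral>\<^sup>+a. \<rho> a * indicator {0..} t * indicator (B t) a \<partial>N)" .
  qed
  also have "\<dots> = (\<integral>\<^sup>+a. \<integral>\<^sup>+t. \<rho> a * indicator {0..} t * indicator (B t) a \<partial>lborel \<partial>N)"
    by (rule PN.Fubini') (unfold B_def, measurable)
  also have "\<dots> = (\<integral>\<^sup>+a. \<rho> a * ennreal (H a) \<partial>N)"
  proof (rule nn_integral_cong)
    fix a assume a: "a \<in> space N"
    have "(\<integral>\<^sup>+t. \<rho> a * indicator {0..} t * indicator (B t) a \<partial>lborel) = (\<integral>\<^sup>+t. \<rho> a * indicator {0..<H a} t \<partial>lborel)"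
      using a by (intro nn_integral_cong) (auto simp: B_def indicator_def)
    also have "\<dots> = \<rho> a * ennreal (H a)" using H0[OF a] by (subst nn_integral_cmult) auto
    finally show "(\<integral>\<^sup>+t. \<rho> a * indicator {0..} t * indicator (B t) a \<partial>lborel) = \<rho> a * ennreal (H a)" .
  qed
  finally show ?thesis .
qed



lemma transfer_part:
  fixes M :: "'a measure" and N :: "'b measure" and fG :: "'a \<Rightarrow> real" and S :: "'a \<Rightarrow> 'b"
    and H :: "'b \<Rightarrow> real" and r :: "'b \<Rightarrow> real" and Sym :: "'b set \<Rightarrow> bool"
  assumes sfM: "sigma_finite_measure M" and sfN: "sigma_finite_measure N"
    and fG[measurable]: "fG \<in> borel_measurable M" and fG0: "\<And>g. g \<in> space M \<Longrightarrow> 0 \<le> fG g"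
    and S: "\<And>g. g \<in> space M \<Longrightarrow> S g \<in> space N"
    and H[measurable]: "H \<in> borel_measurable N" and H0: "\<And>a. a \<in> space N \<Longrightarrow> 0 \<le> H a"
    and intM: "integrable M (\<lambda>g. fG g * H (S g))"
    and r[measurable]: "r \<in> borel_measurable N" and r0: "\<And>a. a \<in> space N \<Longrightarrow> 0 \<le> r a"
    and symH: "\<And>t. Sym {a \<in> space N. t < H a}"
    and hyp: "\<And>B. B \<in> sets N \<Longrightarrow> Sym B \<Longrightarrow>
        (\<integral>\<^sup>+g. ennreal (fG g) * indicator B (S g) \<partial>M) = (\<integral>\<^sup>+a. ennreal (r a) * indicator B a \<partial>N)"
  shows "integrable N (\<lambda>a. r a * H a) \<and> (\<integral>g. fG g * H (S g) \<partial>M) = (\<integral>a. r a * H a \<partial>N)"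
proof -
  have HS: "(\<lambda>g. fG g * H (S g)) \<in> borel_measurable M" using intM by measurable
  have eq: "(\<integral>\<^sup>+g. ennreal (fG g * H (S g)) \<partial>M) = (\<integral>\<^sup>+a. ennreal (r a) * ennreal (H a) \<partial>N)"
    apply (rule transfer_nn[where \<rho>="\<lambda>a. ennreal (r a)" and Sym=Sym])
    apply (rule sfM)
    apply (rule sfN)
    apply (rule fG)
    apply (erule fG0)
    apply (erule S)
    apply (rule H)
    apply (erule H0)
    apply (rule HS)
    apply measurable
    apply (rule symH)
    apply (erule (1) hyp)
    done
  also have "\<dots> = (\<integral>\<^sup>+a. ennreal (r a * H a) \<partial>N)"
    using r0 H0 by (intro nn_integral_cong) (simp add: ennreal_mult)
  finally have eq2: "(\<integral>\<^sup>+g. ennreal (fG g * H (S g)) \<partial>M) = (\<integral>\<^sup>+a. ennreal (r a * H a) \<partial>N)" .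
  have nnM: "AE g in M. 0 \<le> fG g * H (S g)" using fG0 H0 S by (auto intro!: AE_I2)
  have fin: "(\<integral>\<^sup>+g. ennreal (fG g * H (S g)) \<partial>M) = ennreal (\<integral>g. fG g * H (S g) \<partial>M)"
    by (rule nn_integral_eq_integral[OF intM nnM])
  have nnN: "AE a in N. 0 \<le> r a * H a" using r0 H0 by (auto intro!: AE_I2)
  have intN: "integrable N (\<lambda>a. r a * H a)"
  proof (rule integrableI_nonneg)
    have fin2: "(\<integral>\<^sup>+a. ennreal (r a * H a) \<partial>N) = ennreal (\<integral>g. fG g * H (S g) \<partial>M)"
      using eq2 fin by simp
    show "(\<integral>\<^sup>+a. ennreal (r a * H a) \<partial>N) < \<infinity>" unfolding fin2 by simp
  qed (use nnN in auto)
  have "ennreal (\<integral>a. r a * H a \<partial>N) = ennreal (\<integral>g. fG g * H (S g) \<partial>M)"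
    using nn_integral_eq_integral[OF intN nnN] eq2 fin by simp
  moreover have "0 \<le> (\<integral>a. r a * H a \<partial>N)" "0 \<le> (\<integral>g. fG g * H (S g) \<partial>M)"
    using nnN nnM by (auto intro: integral_nonneg_AE)
  ultimately show ?thesis using intN by simp
qed

lemma transfer_real:
  fixes M :: "'a measure" and N :: "'b measure" and fG :: "'a \<Rightarrow> real" and S :: "'a \<Rightarrow> 'b"
    and H :: "'b \<Rightarrow> real" and r :: "'b \<Rightarrow> real" and Sym :: "'b set \<Rightarrow> bool"
  assumes sfM: "sigma_finite_measure M" and sfN: "sigma_finite_measure N"
    and fG[measurable]: "fG \<in> borel_measurable M" and fG0: "\<And>g. g \<in> space M \<Longrightarrow> 0 \<le> fG g"
    and S: "\<And>g. g \<in> space M \<Longrightarrow> S g \<in> space N"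
    and H[measurable]: "H \<in> borel_measurable N"
    and intM: "integrable M (\<lambda>g. fG g * H (S g))"
    and r[measurable]: "r \<in> borel_measurable N" and r0: "\<And>a. a \<in> space N \<Longrightarrow> 0 \<le> r a"
    and symH: "\<And>P. Sym {a \<in> space N. P (H a)}"
    and hyp: "\<And>B. B \<in> sets N \<Longrightarrow> Sym B \<Longrightarrow>
        (\<integral>\<^sup>+g. ennreal (fG g) * indicator B (S g) \<partial>M) = (\<integral>\<^sup>+a. ennreal (r a) * indicator B a \<partial>N)"
  shows "integrable N (\<lambda>a. r a * H a) \<and> (\<integral>g. fG g * H (S g) \<partial>M) = (\<integral>a. r a * H a \<partial>N)"
proof -
  define Hp where "Hp a = max (H a) 0" for a
  define Hn where "Hn a = max (- H a) 0" for a
  have intp: "integrable M (\<lambda>g. fG g * Hp (S g))"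
  proof -
    have "integrable M (\<lambda>g. max (fG g * H (S g)) 0)" using intM by auto
    moreover have "max (fG g * H (S g)) 0 = fG g * Hp (S g)" if "g \<in> space M" for g
      using fG0[OF that] by (auto simp: Hp_def max_def mult_le_0_iff)
    ultimately show ?thesis using Bochner_Integration.integrable_cong[OF refl] by (metis (no_types, lifting))
  qed
  have intn: "integrable M (\<lambda>g. fG g * Hn (S g))"
  proof -
    have "integrable M (\<lambda>g. max (- (fG g * H (S g))) 0)" using intM by auto
    moreover have "max (- (fG g * H (S g))) 0 = fG g * Hn (S g)" if "g \<in> space M" for g
      using fG0[OF that] by (auto simp: Hn_def max_def mult_le_0_iff zero_le_mult_iff)
    ultimately show ?thesis using Bochner_Integration.integrable_cong[OF refl] by (metis (no_types, lifting))
  qed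
  have P: "integrable N (\<lambda>a. r a * Hp a) \<and> (\<integral>g. fG g * Hp (S g) \<partial>M) = (\<integral>a. r a * Hp a \<partial>N)"
    by (rule transfer_part[OF sfM sfN fG fG0 S _ _ intp r r0 _ hyp])
       (auto simp: Hp_def intro: symH)
  have Nn: "integrable N (\<lambda>a. r a * Hn a) \<and> (\<integral>g. fG g * Hn (S g) \<partial>M) = (\<integral>a. r a * Hn a \<partial>N)"
    by (rule transfer_part[OF sfM sfN fG fG0 S _ _ intn r r0 _ hyp])
       (auto simp: Hn_def intro: symH)
  have e1: "r a * H a = r a * Hp a - r a * Hn a" for a by (simp add: Hp_def Hn_def max_def algebra_simps)
  have e2: "fG g * H (S g) = fG g * Hp (S g) - fG g * Hn (S g)" for g by (simp add: Hp_def Hn_def max_def algebra_simps)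
  have "integrable N (\<lambda>a. r a * H a)" unfolding e1 using P Nn by auto
  moreover have "(\<integral>g. fG g * H (S g) \<partial>M) = (\<integral>a. r a * H a \<partial>N)"
    unfolding e1 e2 using P Nn intp intn by (simp add: Bochner_Integration.integral_diff)
  ultimately show ?thesis by simp
qed



lemma cpowr_real_eq:
  "complex_of_real x powr c = (if x = 0 then 0 else exp (c * (of_real (ln \<bar>x\<bar>) + (if x < 0 then pi else 0) * \<i>)))"
  by (cases "x = 0") (simp_all add: powr_def Ln_of_real')

lemma cpowr_real_measurable[measurable]:
  "(\<lambda>x::real. complex_of_real x powr c) \<in> borel_measurable borel"
  unfolding cpowr_real_eq by measurable

lemma measurable_det:
  fixes f :: "nat \<Rightarrow> nat \<Rightarrow> 'b \<Rightarrow> 'a::{second_countable_topology, real_normed_field}"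
  assumes "\<And>i j. f i j \<in> borel_measurable N"
  shows "(\<lambda>x. det (mat n n (\<lambda>(i,j). f i j x))) \<in> borel_measurable N"
proof -
  have "(\<lambda>x. \<Sum>p\<in>{p. p permutes {0..<n}}. of_int (sign p) * (\<Prod>i\<in>{..<n}. f i (p i) x)) \<in> borel_measurable N"
    using assms by measurable
  thus ?thesis unfolding det_expand_cols .
qed

lemma vandermonde_cong: "(\<And>i. i < n \<Longrightarrow> x i = y i) \<Longrightarrow> vandermonde n x = vandermonde n y"
  unfolding vandermonde_def by (intro prod.cong refl) auto

lemma vandermonde_perm:
  assumes p: "p permutes {..<n}"
  shows "vandermonde n (\<lambda>i. x (p i)) = of_int (sign p) * vandermonde n x"
proof -
  define A where "A = mat n n (\<lambda>(i,j). x i ^ j)"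
  have p': "p permutes {0..<n}" using p by (simp add: atLeast0LessThan)
  have pin: "i < n \<Longrightarrow> p i < n" for i using permutes_in_image[OF p, of i] by simp
  have "mat n n (\<lambda>(i,j). x (p i) ^ j) = mat n n (\<lambda>(i,j). A $$ (p i, j))"
    using p by (intro eq_matI) (auto simp: A_def pin)
  thus ?thesis using det_permute_rows[of A n p] p' unfolding vandermonde_det A_def by simp
qed

definition Hc :: "nat \<Rightarrow> (nat \<Rightarrow> complex) \<Rightarrow> (nat \<Rightarrow> real) \<Rightarrow> complex" where
  "Hc n s a = vandermonde n (rho' n) / vandermonde n s *
     (det (mat n n (\<lambda>(j,k). complex_of_real (a j) powr (s k + (of_nat n - 1) / 2)))
       / complex_of_real (vandermonde n a)) / complex_of_real ((\<Prod>i<n. a i) ^ n)"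

lemma Hc_measurable[measurable]: "Hc n s \<in> borel_measurable (lebesgue_vec n)"
proof -
  have m: "(\<lambda>a. a j) \<in> borel_measurable (lebesgue_vec n)" if "j < n" for j
    using measurable_component_singleton[of j "{..<n}" "\<lambda>_. lborel"] that unfolding lebesgue_vec_def by simp
  have "(\<lambda>a. complex_of_real (a j) powr c) \<in> borel_measurable (lebesgue_vec n)" for j c
  proof (cases "j < n")
    case True then show ?thesis using m by measurable
  next
    case False
    have "(\<lambda>a::nat\<Rightarrow>real. complex_of_real (a j) powr c) \<in> borel_measurable (lebesgue_vec n) \<longleftrightarrow>
          (\<lambda>a::nat\<Rightarrow>real. complex_of_real (undefined) powr c) \<in> borel_measurable (lebesgue_vec n)"
      using False by (intro measurable_cong) (auto simp: space_lebesgue_vec PiE_def extensional_def)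
    then show ?thesis by simp
  qed
  hence d: "(\<lambda>a. det (mat n n (\<lambda>(j,k). complex_of_real (a j) powr (s k + (of_nat n - 1) / 2)))) \<in> borel_measurable (lebesgue_vec n)"
    by (intro measurable_det)
  have v: "(\<lambda>a. vandermonde n a) \<in> borel_measurable (lebesgue_vec n)"
    unfolding vandermonde_def using m by measurable
  have q: "(\<lambda>a. (\<Prod>i<n. a i)) \<in> borel_measurable (lebesgue_vec n)"
    using m by measurable
  show ?thesis unfolding Hc_def[abs_def] using d v q by measurable
qed

lemma Hc_sym:
  assumes p: "p permutes {..<n}"
  shows "Hc n s (restrict (a \<circ> p) {..<n}) = Hc n s a"
proof -
  have p': "p permutes {0..<n}" using p by (simp add: atLeast0LessThan)
  have pin: "i < n \<Longrightarrow> p i < n" for i using permutes_in_image[OF p, of i] by simp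
  define A where "A = mat n n (\<lambda>(j,k). complex_of_real (a j) powr (s k + (of_nat n - 1) / 2))"
  have D: "det (mat n n (\<lambda>(j,k). complex_of_real (restrict (a \<circ> p) {..<n} j) powr (s k + (of_nat n - 1) / 2)))
      = of_int (sign p) * det A"
  proof -
    have "mat n n (\<lambda>(j,k). complex_of_real (restrict (a \<circ> p) {..<n} j) powr (s k + (of_nat n - 1) / 2))
        = mat n n (\<lambda>(j,k). A $$ (p j, k))"
      by (intro eq_matI) (auto simp: A_def pin)
    thus ?thesis using det_permute_rows[of A n p] p' by (simp add: A_def)
  qed
  have V: "vandermonde n (restrict (a \<circ> p) {..<n}) = of_int (sign p) * vandermonde n a"
  proof -
    have "vandermonde n (restrict (a \<circ> p) {..<n}) = vandermonde n (\<lambda>i. a (p i))"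
      by (rule vandermonde_cong) auto
    thus ?thesis using vandermonde_perm[OF p] by simp
  qed
  have Q: "(\<Prod>i<n. restrict (a \<circ> p) {..<n} i) = (\<Prod>i<n. a i)"
  proof -
    have "(\<Prod>i<n. restrict (a \<circ> p) {..<n} i) = (\<Prod>i<n. a (p i))" by simp
    also have "\<dots> = (\<Prod>i<n. a i)" using prod.permute[OF p, of a] by (simp add: o_def)
    finally show ?thesis .
  qed
  have sgn: "(of_int (sign p) :: complex) \<noteq> 0" by (simp add: sign_def)
  show ?thesis unfolding Hc_def D V Q A_def[symmetric]
    using sgn by (simp add: sign_def)
qed



lemma sq_sv_space: "sq_sv n g \<in> space (lebesgue_vec n)"
  by (simp add: space_lebesgue_vec sq_sv_def)

lemma sph_eq: "spherical_integrand n fG s g = complex_of_real (fG g) * Hc n s (sq_sv n g)"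
proof -
  have "cmod (det (to_mat n g)) ^ (2 * n) = (\<Prod>i<n. sq_sv n g i) ^ n"
    by (simp add: sq_sv_prod power_mult)
  thus ?thesis unfolding spherical_integrand_def spherical_fun_def Hc_def Let_def by simp
qed

interpretation lbc: product_sigma_finite "\<lambda>_::nat\<times>nat. (lborel :: complex measure)"
  by unfold_locales

lemma sigma_finite_mat: "sigma_finite_measure (lebesgue_mat n)"
  unfolding lebesgue_mat_def by (rule lbc.sigma_finite) (simp add: Mat_idx_def)

lemma sigma_finite_vec: "sigma_finite_measure (lebesgue_vec n)"
  unfolding lebesgue_vec_def by (rule lb.sigma_finite) simp

lemma restrict_perm_space:
  assumes "a \<in> space (lebesgue_vec n)"
  shows "restrict (a \<circ> p) {..<n} \<in> space (lebesgue_vec n)"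
  by (simp add: space_lebesgue_vec)

lemma sym_level_Hc:
  "perm_symmetric_set n {a \<in> space (lebesgue_vec n). P (Hc n s a)}"
  unfolding perm_symmetric_set_def using Hc_sym restrict_perm_space by auto

lemma transfer_complex:
  fixes fG :: "(nat \<times> nat \<Rightarrow> complex) \<Rightarrow> real" and r :: "(nat \<Rightarrow> real) \<Rightarrow> real"
  assumes fG[measurable]: "fG \<in> borel_measurable (lebesgue_mat n)"
    and fG0: "\<And>g. g \<in> space (lebesgue_mat n) \<Longrightarrow> 0 \<le> fG g"
    and r[measurable]: "r \<in> borel_measurable (lebesgue_vec n)" and r0: "\<And>a. a \<in> space (lebesgue_vec n) \<Longrightarrow> 0 \<le> r a"
    and hyp: "\<And>B. B \<in> sets (lebesgue_vec n) \<Longrightarrow> perm_symmetric_set n B \<Longrightarrow>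
        (\<integral>\<^sup>+g. ennreal (fG g) * indicator B (sq_sv n g) \<partial>lebesgue_mat n) = (\<integral>\<^sup>+a. ennreal (r a) * indicator B a \<partial>lebesgue_vec n)"
    and intM: "integrable (lebesgue_mat n) (\<lambda>g. complex_of_real (fG g) * Hc n s (sq_sv n g))"
  shows "integrable (lebesgue_vec n) (\<lambda>a. complex_of_real (r a) * Hc n s a) \<and>
     (\<integral>g. complex_of_real (fG g) * Hc n s (sq_sv n g) \<partial>lebesgue_mat n) = (\<integral>a. complex_of_real (r a) * Hc n s a \<partial>lebesgue_vec n)"
proof -
  have intRe: "integrable (lebesgue_mat n) (\<lambda>g. fG g * Re (Hc n s (sq_sv n g)))"
    using integrable_Re[OF intM] by simp
  have intIm: "integrable (lebesgue_mat n) (\<lambda>g. fG g * Im (Hc n s (sq_sv n g)))"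
    using integrable_Im[OF intM] by simp
  have R: "integrable (lebesgue_vec n) (\<lambda>a. r a * Re (Hc n s a)) \<and>
     (\<integral>g. fG g * Re (Hc n s (sq_sv n g)) \<partial>lebesgue_mat n) = (\<integral>a. r a * Re (Hc n s a) \<partial>lebesgue_vec n)"
    by (rule transfer_real[where Sym="perm_symmetric_set n", OF sigma_finite_mat sigma_finite_vec fG fG0 sq_sv_space _ intRe r r0 sym_level_Hc hyp])
       measurable
  have I: "integrable (lebesgue_vec n) (\<lambda>a. r a * Im (Hc n s a)) \<and>
     (\<integral>g. fG g * Im (Hc n s (sq_sv n g)) \<partial>lebesgue_mat n) = (\<integral>a. r a * Im (Hc n s a) \<partial>lebesgue_vec n)"
    by (rule transfer_real[where Sym="perm_symmetric_set n", OF sigma_finite_mat sigma_finite_vec fG fG0 sq_sv_space _ intIm r r0 sym_level_Hc hyp])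
       measurable
  have eqf: "complex_of_real (r a) * Hc n s a = complex_of_real (r a * Re (Hc n s a)) + \<i> * complex_of_real (r a * Im (Hc n s a))" for a
    by (simp add: complex_eq_iff)
  have intN: "integrable (lebesgue_vec n) (\<lambda>a. complex_of_real (r a) * Hc n s a)"
    unfolding eqf using R I by (intro Bochner_Integration.integrable_add integrable_mult_right integrable_of_real) auto
  have "(\<integral>g. complex_of_real (fG g) * Hc n s (sq_sv n g) \<partial>lebesgue_mat n) = (\<integral>a. complex_of_real (r a) * Hc n s a \<partial>lebesgue_vec n)"
  proof -
    have a1: "Re (\<integral>g. complex_of_real (fG g) * Hc n s (sq_sv n g) \<partial>lebesgue_mat n) = (\<integral>g. Re (complex_of_real (fG g) * Hc n s (sq_sv n g)) \<partial>lebesgue_mat n)"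
      by (rule integral_Re[symmetric]) (rule intM)
    have a2: "Im (\<integral>g. complex_of_real (fG g) * Hc n s (sq_sv n g) \<partial>lebesgue_mat n) = (\<integral>g. Im (complex_of_real (fG g) * Hc n s (sq_sv n g)) \<partial>lebesgue_mat n)"
      by (rule integral_Im[symmetric]) (rule intM)
    have b1: "Re (\<integral>a. complex_of_real (r a) * Hc n s a \<partial>lebesgue_vec n) = (\<integral>a. Re (complex_of_real (r a) * Hc n s a) \<partial>lebesgue_vec n)"
      by (rule integral_Re[symmetric]) (rule intN)
    have b2: "Im (\<integral>a. complex_of_real (r a) * Hc n s a \<partial>lebesgue_vec n) = (\<integral>a. Im (complex_of_real (r a) * Hc n s a) \<partial>lebesgue_vec n)"
      by (rule integral_Im[symmetric]) (rule intN)
    show ?thesis unfolding complex_eq_iff a1 a2 b1 b2 using R I by simp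
  qed
  with intN show ?thesis by simp
qed



lemma vec_comp_measurable[measurable]:
  assumes [measurable]: "h \<in> borel_measurable borel"
  shows "(\<lambda>a. h (a k)) \<in> borel_measurable (lebesgue_vec n)"
proof (cases "k < n")
  case True
  have "(\<lambda>a::nat\<Rightarrow>real. a k) \<in> measurable (lebesgue_vec n) borel"
    using measurable_component_singleton[of k "{..<n}" "\<lambda>_. lborel"] True unfolding lebesgue_vec_def by simp
  then show ?thesis by measurable
next
  case False
  have "(\<lambda>a::nat\<Rightarrow>real. h (a k)) \<in> borel_measurable (lebesgue_vec n) \<longleftrightarrow>
        (\<lambda>a::nat\<Rightarrow>real. h undefined) \<in> borel_measurable (lebesgue_vec n)"
    using False by (intro measurable_cong) (auto simp: space_lebesgue_vec PiE_def extensional_def)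
  then show ?thesis by simp
qed

lemma vec_comp_measurable_id[measurable]: "(\<lambda>a. a k) \<in> borel_measurable (lebesgue_vec n)"
  using vec_comp_measurable[of "\<lambda>x. x" k n] by simp

lemma pos_orthant_sets[measurable]: "pos_orthant n \<in> sets (lebesgue_vec n)"
  unfolding pos_orthant_def by measurable

lemma of_real_det: "complex_of_real (det (mat n n (\<lambda>(i,j). f i j))) = det (mat n n (\<lambda>(i,j). complex_of_real (f i j)))"
  unfolding det_expand_cols by (simp add: of_real_sum of_real_prod)

lemma det_swap_idx: "det (mat n n (\<lambda>(j,k). f k j)) = det (mat n n (\<lambda>(i,j). (f i j :: 'a::comm_ring_1)))"
proof -
  have "mat n n (\<lambda>(j,k). f k j) = transpose_mat (mat n n (\<lambda>(i,j). f i j))"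
    by (intro eq_matI) auto
  thus ?thesis using det_transpose[of "mat n n (\<lambda>(i,j). f i j)" n] by simp
qed

lemma L1k0_moment:
  assumes L: "L1k0 {1..real n} f" and j: "j < n"
  shows "set_integrable lborel {0<..} (\<lambda>x. complex_of_real (x ^ j) * complex_of_real (f x))"
proof -
  have k: "real (Suc j) \<in> {1..real n}" using j by auto
  have "set_integrable lborel {0<..} (\<lambda>y. y powr (real (Suc j) - 1) * f y)"
    using L k unfolding L1k0_def by blast
  hence "set_integrable lborel {0<..} (\<lambda>y. y ^ j * f y)"
    by (rule set_integrable_cong[THEN iffD1, rotated -1]) (auto simp: powr_realpow)
  hence "integrable lborel (\<lambda>x. complex_of_real (indicator {0<..} x *\<^sub>R (x ^ j * f x)))"
    unfolding set_integrable_def by (rule integrable_of_real)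
  thus ?thesis unfolding set_integrable_def by (simp add: scaleR_conv_of_real)
qed

lemma fSV_normalization:
  assumes L: "\<forall>j<n. L1k0 {1..real n} (w j)"
  shows "integrable (lebesgue_vec n) (\<lambda>a. f_SV n w a * indicator (pos_orthant n) a) \<and>
    (\<integral>a. f_SV n w a * indicator (pos_orthant n) a \<partial>lebesgue_vec n) =
      C_sv n w * fact n * det (mat n n (\<lambda>(j,k). set_lebesgue_integral lborel {0<..} (\<lambda>a. a ^ k * w j a)))"
proof -
  define u where "u j x = complex_of_real (x ^ j)" for j x
  define v where "v j x = complex_of_real (w j x)" for j x
  define F where "F a = indicator (pos_orthant n) a *\<^sub>R (det (mat n n (\<lambda>(i,j). u j (a i))) * det (mat n n (\<lambda>(i,j). v j (a i))))" for a
  have int: "set_integrable lborel {0<..} (\<lambda>x. u j x * v k x)" if "j < n" "k < n" for j k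
    unfolding u_def v_def using L1k0_moment[of n "w k" j] L that by auto
  have A: "integrable (lebesgue_vec n) F \<and> integral\<^sup>L (lebesgue_vec n) F =
     of_nat (fact n) * det (mat n n (\<lambda>(j,k). set_lebesgue_integral lborel {0<..} (\<lambda>x. u j x * v k x)))"
    unfolding F_def by (rule andreief) (rule int)
  have FE: "complex_of_real (f_SV n w a * indicator (pos_orthant n) a) = complex_of_real (C_sv n w) * F a" for a
  proof -
    have "complex_of_real (vandermonde n a) = det (mat n n (\<lambda>(i,j). u j (a i)))"
      unfolding vandermonde_det u_def by (rule of_real_det)
    moreover have "complex_of_real (det (mat n n (\<lambda>(j,k). w j (a k)))) = det (mat n n (\<lambda>(i,j). v j (a i)))"
      unfolding v_def det_swap_idx[of n "\<lambda>i j. w j (a i)"] by (rule of_real_det)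
    ultimately show ?thesis unfolding f_SV_def F_def by (simp add: scaleR_conv_of_real mult_ac)
  qed
  have m: "set_lebesgue_integral lborel {0<..} (\<lambda>x. u j x * v k x) = complex_of_real (set_lebesgue_integral lborel {0<..} (\<lambda>x. x ^ j * w k x))" for j k
    unfolding u_def v_def of_real_mult[symmetric] by (rule set_integral_complex_of_real)
  have D: "det (mat n n (\<lambda>(j,k). set_lebesgue_integral lborel {0<..} (\<lambda>x. u j x * v k x))) =
     complex_of_real (det (mat n n (\<lambda>(j,k). set_lebesgue_integral lborel {0<..} (\<lambda>a. a ^ k * w j a))))"
    unfolding m of_real_det det_swap_idx[of n "\<lambda>i j. complex_of_real (set_lebesgue_integral lborel {0<..} (\<lambda>a. a ^ j * w i a))"] ..
  have intc: "integrable (lebesgue_vec n) (\<lambda>a. complex_of_real (f_SV n w a * indicator (pos_orthant n) a))"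
    unfolding FE using A by auto
  hence intr: "integrable (lebesgue_vec n) (\<lambda>a. f_SV n w a * indicator (pos_orthant n) a)"
    using integrable_Re[OF intc] by simp
  have "complex_of_real (\<integral>a. f_SV n w a * indicator (pos_orthant n) a \<partial>lebesgue_vec n) =
     (\<integral>a. complex_of_real (f_SV n w a * indicator (pos_orthant n) a) \<partial>lebesgue_vec n)"
    by (rule integral_complex_of_real[symmetric])
  also have "\<dots> = complex_of_real (C_sv n w) * integral\<^sup>L (lebesgue_vec n) F"
    unfolding FE by simp
  also have "\<dots> = complex_of_real (C_sv n w * fact n * det (mat n n (\<lambda>(j,k). set_lebesgue_integral lborel {0<..} (\<lambda>a. a ^ k * w j a))))"
    using A D by simp
  finally show ?thesis using intr by (simp only: of_real_eq_iff)
qed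



lemma vandermonde_rho': "vandermonde n (rho' n) = of_nat (\<Prod>k<n. fact k)"
proof -
  have "vandermonde n (rho' n) = (\<Prod>k<n. \<Prod>j<k. (of_nat (k - j) :: complex))"
    unfolding vandermonde_def rho'_def
    by (intro prod.cong refl) (auto simp: of_nat_diff field_simps)
  also have "\<dots> = (\<Prod>k<n. of_nat (fact k))"
  proof (intro prod.cong refl)
    fix k
    have "(\<Prod>j<k. (of_nat (k - j) :: complex)) = of_nat (\<Prod>j=0..<k. k - j)"
      by (simp add: atLeast0LessThan)
    also have "\<dots> = of_nat (fact k)" using fact_prod_rev[where 'a=nat, of k] by simp
    finally show "(\<Prod>j<k. (of_nat (k - j) :: complex)) = of_nat (fact k)" .
  qed
  finally show ?thesis by simp
qed

lemma vandermonde_zero_dup: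
  assumes "vandermonde n (a :: nat \<Rightarrow> real) = 0"
  shows "\<exists>j k. j < k \<and> k < n \<and> a j = a k"
  using assms unfolding vandermonde_def by (auto simp: prod_zero_iff) metis

lemma pointwise_main:
  assumes a: "a \<in> space (lebesgue_vec n)"
  shows "complex_of_real (f_SV n w a * indicator (pos_orthant n) a) * Hc n s a =
   (complex_of_real (C_sv n w) * (vandermonde n (rho' n) / vandermonde n s)) *
   (indicator (pos_orthant n) a *\<^sub>R (det (mat n n (\<lambda>(i,j). complex_of_real (w j (a i)))) *
       det (mat n n (\<lambda>(i,j). complex_of_real (a i) powr (s j - (of_nat n - 1) / 2 - 1)))))"
proof (cases "a \<in> pos_orthant n")
  case False
  then show ?thesis by simp
next
  case True
  hence pos: "\<And>i. i < n \<Longrightarrow> 0 < a i" by (auto simp: pos_orthant_def)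
  define c where "c k = s k + (of_nat n - 1) / 2" for k
  define Vr where "Vr = vandermonde n a"
  define Wr where "Wr = det (mat n n (\<lambda>(j,k). w j (a k)))"
  define P where "P = det (mat n n (\<lambda>(j,k). complex_of_real (a j) powr c k))"
  define Q where "Q = (\<Prod>i<n. a i) ^ n"
  define X where "X = vandermonde n (rho' n) / vandermonde n s"
  have WU: "complex_of_real Wr = det (mat n n (\<lambda>(i,j). complex_of_real (w j (a i))))"
    unfolding Wr_def det_swap_idx[of n "\<lambda>i j. w j (a i)"] by (rule of_real_det)
  have PV: "P / complex_of_real Q = det (mat n n (\<lambda>(i,j). complex_of_real (a i) powr (s j - (of_nat n - 1) / 2 - 1)))"
  proof -
    have e: "(1 / complex_of_real (a i) ^ n) * (complex_of_real (a i) powr c j) =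
        complex_of_real (a i) powr (s j - (of_nat n - 1) / 2 - 1)" if "i < n" for i j
    proof -
      have nz: "complex_of_real (a i) \<noteq> 0" using pos[OF that] by simp
      have "s j - (of_nat n - 1) / 2 - 1 = c j - of_nat n" by (simp add: c_def field_simps)
      hence "complex_of_real (a i) powr (s j - (of_nat n - 1) / 2 - 1) = complex_of_real (a i) powr c j / complex_of_real (a i) powr of_nat n"
        by (simp add: powr_diff)
      also have "\<dots> = complex_of_real (a i) powr c j / complex_of_real (a i) ^ n"
        using nz by (simp add: powr_nat')
      finally show ?thesis by simp
    qed
    have "det (mat n n (\<lambda>(i,j). complex_of_real (a i) powr (s j - (of_nat n - 1) / 2 - 1)))
        = det (mat n n (\<lambda>(i,j). (1 / complex_of_real (a i) ^ n) * (complex_of_real (a i) powr c j)))"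
      using e by (intro arg_cong[where f=det] eq_matI) auto
    also have "\<dots> = (\<Prod>i<n. 1 / complex_of_real (a i) ^ n) * P"
      unfolding det_scale_rows P_def ..
    also have "(\<Prod>i<n. 1 / complex_of_real (a i) ^ n) = 1 / complex_of_real Q"
      unfolding Q_def by (simp add: prod_dividef prod_power_distrib of_real_prod)
    finally show ?thesis by simp
  qed
  have VW: "complex_of_real Vr * complex_of_real Wr * (P / complex_of_real Vr) = complex_of_real Wr * P"
  proof (cases "Vr = 0")
    case False then show ?thesis by simp
  next
    case True
    then obtain j k where jk: "j < k" "k < n" "a j = a k"
      using vandermonde_zero_dup unfolding Vr_def by blast
    have "Wr = 0" unfolding Wr_def
      by (rule det_identical_columns[of _ n j k]) (use jk in \<open>auto intro!: eq_vecI\<close>)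
    then show ?thesis by simp
  qed
  have H: "Hc n s a = X * (P / complex_of_real Vr) / complex_of_real Q"
    unfolding Hc_def X_def P_def Vr_def Q_def c_def by simp
  have "complex_of_real (f_SV n w a * indicator (pos_orthant n) a) * Hc n s a
     = complex_of_real (C_sv n w) * X * (complex_of_real Vr * complex_of_real Wr * (P / complex_of_real Vr)) / complex_of_real Q"
    using True unfolding H f_SV_def Vr_def[symmetric] Wr_def[symmetric] by (simp add: mult_ac)
  also have "\<dots> = complex_of_real (C_sv n w) * X * (complex_of_real Wr * (P / complex_of_real Q))"
    unfolding VW by simp
  finally show ?thesis using True unfolding WU PV X_def by simp
qed



theorem proposition3p1:
  fixes n :: nat and w :: "nat \<Rightarrow> real \<Rightarrow> real"
    and fG :: "(nat \<times> nat \<Rightarrow> complex) \<Rightarrow> real" and s :: "nat \<Rightarrow> complex"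
  assumes "\<forall>j<n. L1k0 {1..real n} (w j)"
    and "polynomial_ensemble n w fG"
    and "\<forall>j<n. \<forall>k<n. j \<noteq> k \<longrightarrow> s j \<noteq> s k"
    and "integrable (lebesgue_mat n) (spherical_integrand n fG s)"
    and "\<forall>j<n. \<forall>k<n. mellin_defined (w j) (s k - (of_nat n - 1) / 2)"
  shows "spherical_transform n fG s =
    complex_of_real (C_sv n w) * of_nat (\<Prod>j\<le>n. fact j) *
    Determinant.det (mat n n (\<lambda>(j,k). mellin (w j) (s k - (of_nat n - 1) / 2))) / vandermonde n s"
proof -
  note L = assms(1)
  have fGm[measurable]: "fG \<in> borel_measurable (lebesgue_mat n)"
    using assms(2) unfolding polynomial_ensemble_def by blast
  have fG0: "\<And>g. g \<in> space (lebesgue_mat n) \<Longrightarrow> 0 \<le> fG g"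
    using assms(2) unfolding polynomial_ensemble_def by blast
  have tot: "(\<integral>\<^sup>+ g. ennreal (fG g) \<partial>lebesgue_mat n) = 1"
    using assms(2) unfolding polynomial_ensemble_def by blast
  have ident: "\<And>B. B \<in> sets (lebesgue_vec n) \<Longrightarrow> perm_symmetric_set n B \<Longrightarrow>
        (\<integral>\<^sup>+ g. ennreal (fG g) * indicator B (sq_sv n g) \<partial>lebesgue_mat n) =
        (\<integral>\<^sup>+ a. ennreal (f_SV n w a) * indicator (B \<inter> pos_orthant n) a \<partial>lebesgue_vec n)"
    using assms(2) unfolding polynomial_ensemble_def by blast
  define D where "D = det (mat n n (\<lambda>(j,k). set_lebesgue_integral lborel {0<..} (\<lambda>a. a ^ k * w j a)))"
  define fO where "fO a = f_SV n w a * indicator (pos_orthant n) a" for a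
  define r where "r a = max 0 (fO a)" for a
  have norm: "integrable (lebesgue_vec n) fO \<and> integral\<^sup>L (lebesgue_vec n) fO = C_sv n w * fact n * D"
    unfolding fO_def D_def using fSV_normalization[OF L] by simp
  have fOm[measurable]: "fO \<in> borel_measurable (lebesgue_vec n)" using norm borel_measurable_integrable by blast
  have rm[measurable]: "r \<in> borel_measurable (lebesgue_vec n)" unfolding r_def by (rule borel_measurable_max[OF fOm borel_measurable_const])
  have r0: "\<And>a. 0 \<le> r a" unfolding r_def by simp
  have hyp: "(\<integral>\<^sup>+g. ennreal (fG g) * indicator B (sq_sv n g) \<partial>lebesgue_mat n) = (\<integral>\<^sup>+a. ennreal (r a) * indicator B a \<partial>lebesgue_vec n)"
    if B: "B \<in> sets (lebesgue_vec n)" "perm_symmetric_set n B" for B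
  proof -
    have "(\<integral>\<^sup>+ a. ennreal (f_SV n w a) * indicator (B \<inter> pos_orthant n) a \<partial>lebesgue_vec n) =
          (\<integral>\<^sup>+a. ennreal (r a) * indicator B a \<partial>lebesgue_vec n)"
      by (intro nn_integral_cong) (auto simp: r_def fO_def indicator_def max_def ennreal_neg)
    thus ?thesis using ident[OF B] by simp
  qed
  have symsp: "perm_symmetric_set n (space (lebesgue_vec n))"
    unfolding perm_symmetric_set_def by (intro allI impI ballI) (rule restrict_perm_space)
  have totr: "(\<integral>\<^sup>+a. ennreal (r a) \<partial>lebesgue_vec n) = 1"
  proof -
    have e1: "(\<integral>\<^sup>+g. ennreal (fG g) * indicator (space (lebesgue_vec n)) (sq_sv n g) \<partial>lebesgue_mat n) = (\<integral>\<^sup>+g. ennreal (fG g) \<partial>lebesgue_mat n)"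
      by (intro nn_integral_cong) (simp add: sq_sv_space)
    have e2: "(\<integral>\<^sup>+a. ennreal (r a) * indicator (space (lebesgue_vec n)) a \<partial>lebesgue_vec n) = (\<integral>\<^sup>+a. ennreal (r a) \<partial>lebesgue_vec n)"
      by (intro nn_integral_cong) simp
    have "(\<integral>\<^sup>+a. ennreal (r a) \<partial>lebesgue_vec n) = (\<integral>\<^sup>+g. ennreal (fG g) \<partial>lebesgue_mat n)"
      using hyp[OF sets.top symsp] unfolding e1 e2 by (rule sym)
    thus ?thesis unfolding tot .
  qed
  have intr: "integrable (lebesgue_vec n) r"
  proof (rule integrableI_nonneg)
    show "AE a in lebesgue_vec n. 0 \<le> r a" by (rule AE_I2) (rule r0)
    show "(\<integral>\<^sup>+a. ennreal (r a) \<partial>lebesgue_vec n) < \<infinity>" using totr by simp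
  qed (rule rm)
  have intr1: "integral\<^sup>L (lebesgue_vec n) r = 1"
  proof -
    have "integral\<^sup>L (lebesgue_vec n) r = enn2real (\<integral>\<^sup>+a. ennreal (r a) \<partial>lebesgue_vec n)"
      by (rule integral_eq_nn_integral[OF rm]) (rule AE_I2, rule r0)
    thus ?thesis using totr by simp
  qed
  have Dnz: "D \<noteq> 0"
  proof
    assume "D = 0"
    hence "C_sv n w = 0" unfolding C_sv_def D_def by simp
    hence "\<And>a. r a = 0" unfolding r_def fO_def f_SV_def by simp
    thus False using totr by simp
  qed
  have intO: "integrable (lebesgue_vec n) fO" using norm by blast
  have int1: "integral\<^sup>L (lebesgue_vec n) fO = 1"
    using norm Dnz unfolding C_sv_def D_def by simp
  have AEr: "AE a in lebesgue_vec n. r a = fO a"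
  proof -
    have i: "integrable (lebesgue_vec n) (\<lambda>a. r a - fO a)" using intr intO by (rule Bochner_Integration.integrable_diff)
    have nn: "AE a in lebesgue_vec n. 0 \<le> r a - fO a" by (auto simp: r_def)
    have "integral\<^sup>L (lebesgue_vec n) (\<lambda>a. r a - fO a) = 0" using Bochner_Integration.integral_diff[OF intr intO] intr1 int1 by simp
    hence "AE a in lebesgue_vec n. r a - fO a = 0" using integral_nonneg_eq_0_iff_AE[OF i nn] by simp
    thus ?thesis by auto
  qed
  have sieq: "spherical_integrand n fG s = (\<lambda>g. complex_of_real (fG g) * Hc n s (sq_sv n g))"
    by (rule ext) (rule sph_eq)
  have intM: "integrable (lebesgue_mat n) (\<lambda>g. complex_of_real (fG g) * Hc n s (sq_sv n g))"
    using assms(4) unfolding sieq .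
  have T: "integrable (lebesgue_vec n) (\<lambda>a. complex_of_real (r a) * Hc n s a) \<and>
     (\<integral>g. complex_of_real (fG g) * Hc n s (sq_sv n g) \<partial>lebesgue_mat n) = (\<integral>a. complex_of_real (r a) * Hc n s a \<partial>lebesgue_vec n)"
    by (rule transfer_complex[OF fGm fG0 rm r0 hyp intM])
  define u where "u j x = complex_of_real (w j x)" for j x
  define v where "v k x = complex_of_real x powr (s k - (of_nat n - 1) / 2 - 1)" for k x
  define K where "K = complex_of_real (C_sv n w) * (vandermonde n (rho' n) / vandermonde n s)"
  have intuv: "set_integrable lborel {0<..} (\<lambda>x. u j x * v k x)" if "j < n" "k < n" for j k
    using assms(5) that unfolding u_def v_def mellin_defined_def by blast
  have A: "integrable (lebesgue_vec n) (\<lambda>a. indicator (pos_orthant n) a *\<^sub>R (det (mat n n (\<lambda>(i,j). u j (a i))) * det (mat n n (\<lambda>(i,j). v j (a i))))) \<and>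
     (\<integral>a. indicator (pos_orthant n) a *\<^sub>R (det (mat n n (\<lambda>(i,j). u j (a i))) * det (mat n n (\<lambda>(i,j). v j (a i)))) \<partial>lebesgue_vec n) =
     of_nat (fact n) * det (mat n n (\<lambda>(j,k). set_lebesgue_integral lborel {0<..} (\<lambda>x. u j x * v k x)))"
    by (rule andreief) (rule intuv)
  have mel: "set_lebesgue_integral lborel {0<..} (\<lambda>x. u j x * v k x) = mellin (w j) (s k - (of_nat n - 1) / 2)" for j k
    unfolding u_def v_def mellin_def ..
  have Aeq: "(\<integral>a. indicator (pos_orthant n) a *\<^sub>R (det (mat n n (\<lambda>(i,j). u j (a i))) * det (mat n n (\<lambda>(i,j). v j (a i)))) \<partial>lebesgue_vec n) =
     of_nat (fact n) * det (mat n n (\<lambda>(j,k). mellin (w j) (s k - (of_nat n - 1) / 2)))"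
    using A unfolding mel by blast
  have "spherical_transform n fG s = (\<integral>g. complex_of_real (fG g) * Hc n s (sq_sv n g) \<partial>lebesgue_mat n)"
    unfolding spherical_transform_def sieq ..
  also have "\<dots> = (\<integral>a. complex_of_real (r a) * Hc n s a \<partial>lebesgue_vec n)" using T by blast
  also have "\<dots> = (\<integral>a. complex_of_real (fO a) * Hc n s a \<partial>lebesgue_vec n)"
  proof (rule integral_cong_AE)
    show "(\<lambda>a. complex_of_real (r a) * Hc n s a) \<in> borel_measurable (lebesgue_vec n)"
      by (rule borel_measurable_times[OF measurable_compose[OF rm borel_measurable_of_real] Hc_measurable])
    show "(\<lambda>a. complex_of_real (fO a) * Hc n s a) \<in> borel_measurable (lebesgue_vec n)"
      by (rule borel_measurable_times[OF measurable_compose[OF fOm borel_measurable_of_real] Hc_measurable])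
    show "AE a in lebesgue_vec n. complex_of_real (r a) * Hc n s a = complex_of_real (fO a) * Hc n s a"
      using AEr by (rule AE_mp) (rule AE_I2, simp)
  qed
  also have "\<dots> = (\<integral>a. K * (indicator (pos_orthant n) a *\<^sub>R (det (mat n n (\<lambda>(i,j). u j (a i))) * det (mat n n (\<lambda>(i,j). v j (a i))))) \<partial>lebesgue_vec n)"
  proof (intro Bochner_Integration.integral_cong refl)
    fix a assume a: "a \<in> space (lebesgue_vec n)"
    show "complex_of_real (fO a) * Hc n s a = K * (indicator (pos_orthant n) a *\<^sub>R (det (mat n n (\<lambda>(i,j). u j (a i))) * det (mat n n (\<lambda>(i,j). v j (a i)))))"
      unfolding fO_def K_def u_def v_def by (rule pointwise_main[OF a])
  qed
  also have "\<dots> = K * (of_nat (fact n) * det (mat n n (\<lambda>(j,k). mellin (w j) (s k - (of_nat n - 1) / 2))))"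
    unfolding integral_mult_right_zero Aeq ..
  also have "\<dots> = complex_of_real (C_sv n w) * of_nat (\<Prod>j\<le>n. fact j) *
    Determinant.det (mat n n (\<lambda>(j,k). mellin (w j) (s k - (of_nat n - 1) / 2))) / vandermonde n s"
  proof -
    have e: "(of_nat (\<Prod>j\<le>n. fact j) :: complex) = of_nat (fact n) * of_nat (\<Prod>j<n. fact j)"
      by (simp add: lessThan_Suc_atMost[symmetric] prod.lessThan_Suc del: of_nat_prod)
    show ?thesis unfolding K_def vandermonde_rho' e by (simp add: mult_ac)
  qed
  finally show ?thesis .
qed


end
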